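(* Let $n=3$ and let $l_1,l_2,l_3,l_\infty$ be nonnegative integers. Two diagrams $x,y\in X(l_1,l_2,l_3,l_\infty)$ lie in the same $J_3$-orbit if and only if they have the same border thickness.
   Context: Cactus group: $J_n$ is the group generated by $s_{p,q}$, $1\le p<q\le n$, subject to the relations $s_{p,q}^2=e$; $s_{p,q}s_{p',q'}=s_{p',q'}s_{p,q}$ if $[p,q]$ and $[p',q']$ are disjoint; $s_{p,q}s_{p',q'}s_{p,q}=s_{p+q-q',p+q-p'}$ if $p\le p'<q'\le q$. Arc diagrams: fix nonnegative integers $l_1,\dots,l_n,l_\infty$. On the boundary circle of a closed disc place $n+1$ marked positions: position $0$ (occupied by $z_\infty$) and positions $1,\dots,n$ following it clockwise. An arc diagram is a bijective assignment of labels $z_1,\dots,z_n$ to positions $1,\dots,n$ together with a finite collection of simple arcs in the disc, pairwise disjoint except at endpoints, each joining two distinct marked points, such that $z_j$ is an endpoint of exactly $l_j$ arcs ($j\in\{1,\dots,n,\infty\}$; $l_j$ is the valence). Parallel arcs are allowed; diagrams are up to isotopy, equivalently determined by the labelling and the number of arcs between each pair of marked points. $X(l_1,\dots,l_n,l_\infty)$ is the set of such diagrams. Action: $s_{p,q}$ ($1\le p<q\le n$) acts by cutting off positions $p,\dots,q$ with a chord $\ell$ (arcs isotoped to cross $\ell$ at most once), reflecting that region by the reflection reversing $\ell$ (label at position $p+t$ goes to position $q-t$, crossing points on $\ell$ reversed), leaving the rest unchanged and reconnecting arcs at $\ell$. Words act right to left; this is an action of $J_n$. Border thickness: the minimum,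 over the $n+1$ cyclically adjacent pairs of positions $(0,1),(1,2),\dots,(n-1,n),(n,0)$, of the number of arcs joining the two points of the pair. *)

theory Defs
  imports Main
begin

text \<open>An arc diagram is encoded as a pair (lab, c): lab k is the label index j of z_j sitting
at position k (k = 1..n; lab k = 0 otherwise), and c i j is the number of arcs joining the
marked points at positions i and j (positions 0..n, position 0 carrying z_infinity).\<close>

type_synonym diagram = "(nat \<Rightarrow> nat) \<times> (nat \<Rightarrow> nat \<Rightarrow> nat)"

definition arc_diagrams :: "nat \<Rightarrow> (nat \<Rightarrow> nat) \<Rightarrow> nat \<Rightarrow> diagram set" where
  "arc_diagrams n l linf = {(lab, c).
     bij_betw lab {1..n} {1..n} \<and> (\<forall>k. k \<notin> {1..n} \<longrightarrow> lab k = 0) \<and>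
     (\<forall>i j. c i j = c j i) \<and> (\<forall>i. c i i = 0) \<and> (\<forall>i j. n < i \<longrightarrow> c i j = 0) \<and>
     (\<forall>i j k m. i < k \<and> k < j \<and> j < m \<and> m \<le> n \<longrightarrow> c i j = 0 \<or> c k m = 0) \<and>
     (\<Sum>j\<le>n. c 0 j) = linf \<and>
     (\<forall>i\<in>{1..n}. (\<Sum>j\<le>n. c i j) = l (lab i))}"

text \<open>Arcs crossing the chord cutting off positions p..q, listed in order along the chord
starting from its end between positions p-1 and p: inside endpoints (nondecreasing) and
outside endpoints (in the order p-1, ..., 0, n, ..., q+1).\<close>

definition cross_ins :: "nat \<Rightarrow> nat \<Rightarrow> nat \<Rightarrow> (nat \<Rightarrow> nat \<Rightarrow> nat) \<Rightarrow> nat list" where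
  "cross_ins n p q c =
     concat (map (\<lambda>i. replicate (\<Sum>r\<in>{0..n} - {p..q}. c i r) i) [p..<Suc q])"

definition cross_outs :: "nat \<Rightarrow> nat \<Rightarrow> nat \<Rightarrow> (nat \<Rightarrow> nat \<Rightarrow> nat) \<Rightarrow> nat list" where
  "cross_outs n p q c =
     concat (map (\<lambda>r. replicate (\<Sum>i\<in>{p..q}. c i r) r) (rev [0..<p] @ rev [Suc q..<Suc n]))"

text \<open>After reflecting the inside region, the crossing points on the chord are reversed and
inside positions i are sent to p+q-i; the new crossing arcs are reconnected accordingly.\<close>

definition new_cross :: "nat \<Rightarrow> nat \<Rightarrow> nat \<Rightarrow> (nat \<Rightarrow> nat \<Rightarrow> nat) \<Rightarrow> (nat \<times> nat) list" where
  "new_cross n p q c =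
     zip (map (\<lambda>i. p + q - i) (rev (cross_ins n p q c))) (cross_outs n p q c)"

definition act :: "nat \<Rightarrow> nat \<Rightarrow> nat \<Rightarrow> diagram \<Rightarrow> diagram" where
  "act n p q x = (case x of (lab, c) \<Rightarrow>
     (\<lambda>k. if p \<le> k \<and> k \<le> q then lab (p + q - k) else lab k,
      \<lambda>i j. if i \<in> {p..q} \<and> j \<in> {p..q} then c (p + q - i) (p + q - j)
            else if i \<in> {p..q} \<and> j \<le> n then length (filter (\<lambda>e. e = (i, j)) (new_cross n p q c))
            else if j \<in> {p..q} \<and> i \<le> n then length (filter (\<lambda>e. e = (j, i)) (new_cross n p q c))
            else c i j))"

text \<open>A word [g_1,...,g_k] in the generators s_{p,q} acts right to left.\<close>

definition act_word :: "nat \<Rightarrow> (nat \<times> nat) list \<Rightarrow> diagram \<Rightarrow> diagram" where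
  "act_word n w x = foldr (\<lambda>(p, q) y. act n p q y) w x"

definition same_orbit :: "nat \<Rightarrow> diagram \<Rightarrow> diagram \<Rightarrow> bool" where
  "same_orbit n x y \<longleftrightarrow>
     (\<exists>w. set w \<subseteq> {(p, q). 1 \<le> p \<and> p < q \<and> q \<le> n} \<and> act_word n w x = y)"

definition border_thickness :: "nat \<Rightarrow> diagram \<Rightarrow> nat" where
  "border_thickness n x = Min ({snd x i (Suc i) | i. i < n} \<union> {snd x n 0})"

end

theory Submission
  imports Defs
begin


definition labf :: "nat\<Rightarrow>nat\<Rightarrow>nat\<Rightarrow>nat\<Rightarrow>nat" where
 "labf p1 p2 p3 = (\<lambda>k. if k=1 then p1 else if k=2 then p2 else if k=3 then p3 else 0)"
definition mk :: "nat\<Rightarrow>nat\<Rightarrow>nat\<Rightarrow>nat\<Rightarrow>nat\<Rightarrow>nat\<Rightarrow>nat\<Rightarrow>nat\<Rightarrow>nat" where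
 "mk a b c d e f = (\<lambda>i j. if i=0\<and>j=1 \<or> i=1\<and>j=0 then a else if i=1\<and>j=2 \<or> i=2\<and>j=1 then b
   else if i=2\<and>j=3 \<or> i=3\<and>j=2 then c else if i=3\<and>j=0 \<or> i=0\<and>j=3 then d
   else if i=0\<and>j=2 \<or> i=2\<and>j=0 then e else if i=1\<and>j=3 \<or> i=3\<and>j=1 then f else 0)"

lemma s12a: "{0..3::nat} - {1..2} = {0,3}" by auto
lemma s23a: "{0..3::nat} - {2..3} = {0,1}" by auto
lemma s13a: "{0..3::nat} - {1..3} = {0}" by auto
lemma i12: "{1..2::nat} = {1,2}" by auto
lemma i23: "{2..3::nat} = {2,3}" by auto
lemma i13: "{1..3::nat} = {1,2,3}" by auto
lemma ul: "[1..<Suc 2] = [1,2::nat]" "[2..<Suc 3] = [2,3::nat]" "[1..<Suc 3] = [1,2,3::nat]"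
  "rev [0..<1] = [0::nat]" "rev [0..<2] = [1,0::nat]" "rev [Suc 2..<Suc 3] = [3::nat]" "rev [Suc 3..<Suc 3] = ([]::nat list)"
  by (simp_all add: upt_rec)

lemma ci12: "cross_ins 3 1 2 (mk a b c d e f) = replicate (a+f) 1 @ replicate (e+c) 2"
  unfolding cross_ins_def s12a ul by (simp add: mk_def)
lemma co12: "cross_outs 3 1 2 (mk a b c d e f) = replicate (a+e) 0 @ replicate (f+c) 3"
  unfolding cross_outs_def i12 ul by (simp add: mk_def)
lemma ci23: "cross_ins 3 2 3 (mk a b c d e f) = replicate (b+e) 2 @ replicate (f+d) 3"
  unfolding cross_ins_def s23a ul by (simp add: mk_def)
lemma co23: "cross_outs 3 2 3 (mk a b c d e f) = replicate (b+f) 1 @ replicate (e+d) 0"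
  unfolding cross_outs_def i23 ul by (simp add: mk_def)
lemma ci13: "cross_ins 3 1 3 (mk a b c d e f) = replicate a 1 @ replicate e 2 @ replicate d 3"
  unfolding cross_ins_def s13a ul by (simp add: mk_def)
lemma co13: "cross_outs 3 1 3 (mk a b c d e f) = replicate (a+e+d) 0"
  unfolding cross_outs_def i13 ul by (simp add: mk_def)

lemma zip_count2:
  assumes "u \<noteq> v" "s \<noteq> w" "p + q = r + t"
  shows "length (filter (\<lambda>e. e = (x,y)) (zip (replicate p u @ replicate q v) (replicate r s @ replicate t w)))
    = (if x = u \<and> y = s then min p r else if x = u \<and> y = w then p - min p r
       else if x = v \<and> y = s then r - min p r else if x = v \<and> y = w then q - (r - min p r) else 0)"
proof (cases "p \<le> r")
  case True
  have L: "replicate p u @ replicate q v = replicate p u @ replicate (r-p) v @ replicate t v"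
    using True assms by (simp add: replicate_add[symmetric])
  have R: "replicate r s @ replicate t w = replicate p s @ replicate (r-p) s @ replicate t w"
    using True by (simp add: replicate_add[symmetric])
  show ?thesis unfolding L R using True assms by (auto simp: zip_append filter_replicate)
next
  case False
  have L: "replicate p u @ replicate q v = replicate r u @ replicate (p-r) u @ replicate q v"
    using False assms by (simp add: replicate_add[symmetric])
  have R: "replicate r s @ replicate t w = replicate r s @ replicate (p-r) w @ replicate q w"
    using False assms by (simp add: replicate_add[symmetric])
  show ?thesis unfolding L R using False assms by (auto simp: zip_append filter_replicate)
qed

lemma nc12: "new_cross 3 1 2 (mk a b c d e f) = zip (replicate (e+c) 1 @ replicate (a+f) 2) (replicate (a+e) 0 @ replicate (f+c) 3)"
  unfolding new_cross_def ci12 co12 by (simp add: numeral_2_eq_2)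
lemma nc23: "new_cross 3 2 3 (mk a b c d e f) = zip (replicate (f+d) 2 @ replicate (b+e) 3) (replicate (b+f) 1 @ replicate (e+d) 0)"
  unfolding new_cross_def ci23 co23 by simp
lemma nc13: "new_cross 3 1 3 (mk a b c d e f) = map (\<lambda>x. (x,0)) (replicate d 1 @ replicate e 2 @ replicate a 3)"
  unfolding new_cross_def ci13 co13 by (simp add: zip_replicate2)

lemma nat4: "(i::nat) = 0 \<or> i = 1 \<or> i = 2 \<or> i = 3 \<or> 3 < i" by arith

lemma act12: "act 3 1 2 (labf p1 p2 p3, mk a b c d e f) =
   (labf p2 p1 p3, mk (e + min a c) b (f + min a c) d (a - min a c) (c - min a c))"
  unfolding act_def nc12 prod.case
  apply (simp only: prod.inject)
  apply (intro conjI ext)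
   apply (simp add: labf_def)
  subgoal for i j
    using nat4[of i] nat4[of j] apply (elim disjE)
    by (simp_all add: zip_count2 mk_def min_def)
  done

lemma act23: "act 3 2 3 (labf p1 p2 p3, mk a b c d e f) =
   (labf p1 p3 p2, mk a (f + min b d) c (e + min b d) (d - min b d) (b - min b d))"
  unfolding act_def nc23 prod.case
  apply (simp only: prod.inject)
  apply (intro conjI ext)
   apply (simp add: labf_def)
  subgoal for i j
    using nat4[of i] nat4[of j] apply (elim disjE)
    by (simp_all add: zip_count2 mk_def min_def)
  done

lemma act13: "act 3 1 3 (labf p1 p2 p3, mk a b c d e f) =
   (labf p3 p2 p1, mk d c b a e f)"
  unfolding act_def nc13 prod.case
  apply (simp only: prod.inject)
  apply (intro conjI ext)
   apply (simp add: labf_def)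
  subgoal for i j
    using nat4[of i] nat4[of j] apply (elim disjE)
    by (simp_all add: mk_def filter_replicate)
  done


datatype st = St nat nat nat nat nat nat nat nat nat

fun Dg :: "st \<Rightarrow> diagram" where "Dg (St p1 p2 p3 a b c d e f) = (labf p1 p2 p3, mk a b c d e f)"
fun n12 :: "st \<Rightarrow> st" where "n12 (St p1 p2 p3 a b c d e f) = St p2 p1 p3 (e + min a c) b (f + min a c) d (a - min a c) (c - min a c)"
fun n23 :: "st \<Rightarrow> st" where "n23 (St p1 p2 p3 a b c d e f) = St p1 p3 p2 a (f + min b d) c (e + min b d) (d - min b d) (b - min b d)"
fun n13 :: "st \<Rightarrow> st" where "n13 (St p1 p2 p3 a b c d e f) = St p3 p2 p1 d c b a e f"
definition nact :: "nat \<times> nat \<Rightarrow> st \<Rightarrow> st" where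
  "nact g = (if g = (1,2) then n12 else if g = (2,3) then n23 else n13)"
fun vld :: "(nat \<Rightarrow> nat) \<Rightarrow> nat \<Rightarrow> st \<Rightarrow> bool" where
  "vld l linf (St p1 p2 p3 a b c d e f) = ({p1,p2,p3} = {1,2,3} \<and> e*f = 0 \<and> a+d+e = linf \<and> a+b+f = l p1 \<and> b+c+e = l p2 \<and> c+d+f = l p3)"
fun th :: "st \<Rightarrow> nat" where "th (St _ _ _ a b c d _ _) = min a (min b (min c d))"
fun labs :: "st \<Rightarrow> nat \<times> nat \<times> nat" where "labs (St p1 p2 p3 _ _ _ _ _ _) = (p1,p2,p3)"

definition G3 :: "(nat \<times> nat) set" where "G3 = {(p, q). 1 \<le> p \<and> p < q \<and> q \<le> 3}"
lemma G3_eq: "G3 = {(1,2),(2,3),(1,3)}" unfolding G3_def by auto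

lemma actD: "g \<in> G3 \<Longrightarrow> act 3 (fst g) (snd g) (Dg s) = Dg (nact g s)"
proof -
  assume "g \<in> G3"
  then have "g = (1,2) \<or> g = (2,3) \<or> g = (1,3)" by (simp add: G3_eq)
  then show ?thesis
  proof (elim disjE)
    assume g: "g = (1,2)" show ?thesis unfolding g by (cases s) (simp only: fst_conv snd_conv Dg.simps act12 nact_def if_True n12.simps, simp)
  next
    assume g: "g = (2,3)" show ?thesis unfolding g by (cases s) (simp only: fst_conv snd_conv Dg.simps act23 nact_def if_True n23.simps, simp)
  next
    assume g: "g = (1,3)" show ?thesis unfolding g by (cases s) (simp only: fst_conv snd_conv Dg.simps act13 nact_def if_True n13.simps, simp)
  qed
qed

lemma awD: "set w \<subseteq> G3 \<Longrightarrow> act_word 3 w (Dg s) = Dg (foldr nact w s)"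
proof (induction w)
  case Nil then show ?case by (simp add: act_word_def)
next
  case (Cons g w)
  then have "act_word 3 (g # w) (Dg s) = act 3 (fst g) (snd g) (act_word 3 w (Dg s))"
    by (simp add: act_word_def split: prod.splits)
  with Cons show ?case using actD by simp
qed

lemma n12_prop: "vld l linf s \<Longrightarrow> vld l linf (n12 s) \<and> th (n12 s) = th s \<and> n12 (n12 s) = s"
proof (cases s)
  case (St p1 p2 p3 a b c d e f)
  assume v: "vld l linf s"
  show ?thesis
  proof (cases "a \<le> c")
    case True
    then show ?thesis using v St by (auto simp: min_def insert_commute)
  next
    case False
    then show ?thesis using v St by (auto simp: min_def insert_commute)
  qed
qed


lemma n23_prop: "vld l linf s \<Longrightarrow> vld l linf (n23 s) \<and> th (n23 s) = th s \<and> n23 (n23 s) = s"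
proof (cases s)
  case (St p1 p2 p3 a b c d e f)
  assume v: "vld l linf s"
  show ?thesis
  proof (cases "b \<le> d")
    case True
    then show ?thesis using v St by (auto simp: min_def insert_commute)
  next
    case False
    then show ?thesis using v St by (auto simp: min_def insert_commute)
  qed
qed

lemma n13_prop: "vld l linf s \<Longrightarrow> vld l linf (n13 s) \<and> th (n13 s) = th s \<and> n13 (n13 s) = s"
  by (cases s) (auto simp: min_def insert_commute)

lemma nact_prop: "vld l linf s \<Longrightarrow> vld l linf (nact g s) \<and> th (nact g s) = th s \<and> nact g (nact g s) = s"
  unfolding nact_def using n12_prop n23_prop n13_prop by auto

lemma fold_prop: "vld l linf s \<Longrightarrow> vld l linf (foldr nact w s) \<and> th (foldr nact w s) = th s"
  by (induction w) (auto dest: nact_prop)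

lemma fold_inv: "vld l linf s \<Longrightarrow> foldr nact (rev w) (foldr nact w s) = s"
proof (induction w arbitrary: s)
  case Nil then show ?case by simp
next
  case (Cons g w)
  have "foldr nact (rev (g # w)) (foldr nact (g # w) s) = foldr nact (rev w) (nact g (nact g (foldr nact w s)))"
    by simp
  also have "\<dots> = foldr nact (rev w) (foldr nact w s)" using nact_prop fold_prop Cons.prems by metis
  also have "\<dots> = s" using Cons by blast
  finally show ?case .
qed



lemma nW_eq: "e*f = 0 \<Longrightarrow> n23 (n13 (n23 (n12 (St p1 p2 p3 a b c d e f)))) =
   St p1 p2 p3 (a - min a c + min b d) (b - min b d + min a c) (c - min a c + min b d) (d - min b d + min a c) e f"
proof -
  assume "e*f = 0"
  then have ef: "e = 0 \<or> f = 0" by simp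
  have m: "min (f + min a c) (e + min a c) = min a c" using ef by auto
  show ?thesis using m by (simp add: min_def)
qed

lemma k1lem:
  fixes a a' m1 m2 X Y :: nat
  assumes X: "X + a = m1 + a'" and Y: "Y + a' = m2 + a" and tt: "min m1 m2 = min X Y"
  shows "a' = a \<or> a' + m1 = a + m2"
proof -
  have h: "min X Y \<le> X" "min X Y \<le> Y" "min m1 m2 \<le> m1" "min m1 m2 \<le> m2" by simp_all
  have "min X Y = X \<or> min X Y = Y" "min m1 m2 = m1 \<or> min m1 m2 = m2" by (simp_all add: min_def)
  then show ?thesis using h X Y tt by (elim disjE; arith)
qed

lemma key:
  assumes "vld l linf (St 1 2 3 a b c d e f)" "vld l linf (St 1 2 3 a' b' c' d' e' f')"
    "th (St 1 2 3 a b c d e f) = th (St 1 2 3 a' b' c' d' e' f')"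
  shows "St 1 2 3 a' b' c' d' e' f' = St 1 2 3 a b c d e f \<or>
         St 1 2 3 a' b' c' d' e' f' = St 1 2 3 (a - min a c + min b d) (b - min b d + min a c) (c - min a c + min b d) (d - min b d + min a c) e f"
proof -
  have ef: "e = 0 \<or> f = 0" "e' = 0 \<or> f' = 0" using assms by auto
  have eq: "a+d+e = a'+d'+e'" "a+b+f = a'+b'+f'" "b+c+e = b'+c'+e'" "c+d+f = c'+d'+f'" using assms by auto
  have s1: "a+b+c+d+2*e = a'+b'+c'+d'+2*e'" using eq by linarith
  have s2: "a+b+c+d+2*f = a'+b'+c'+d'+2*f'" using eq by linarith
  have ee: "e' = e \<and> f' = f" using ef s1 s2 by auto
  have eq2: "a'+d' = a+d" "a'+b' = a+b" "b'+c' = b+c" "c'+d' = c+d" using eq ee by auto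
  have ac: "a' + c = a + c'" and bd: "b' + d = b + d'" using eq2 by linarith+
  have t: "min (min a c) (min b d) = min (min a' c') (min b' d')" using assms(3) by (simp add: min.assoc min.left_commute)
  define m1 where "m1 = min a c"
  define m2 where "m2 = min b d"
  have bnd: "m1 \<le> a" "m1 \<le> c" "m2 \<le> b" "m2 \<le> d" unfolding m1_def m2_def by auto
  have m1': "min a' c' + a = m1 + a'"
  proof -
    have "min a' c' + a = min (a' + a) (c' + a)" by (simp add: min_add_distrib_right)
    also have "\<dots> = min (a' + a) (a' + c)" using ac by (simp add: add.commute)
    also have "\<dots> = a' + m1" unfolding m1_def by (simp add: min_add_distrib_left)
    finally show ?thesis by simp
  qed
  have m2': "min b' d' + a' = m2 + a"
  proof -
    have "min b' d' + a' = min (b' + a') (d' + a')" by (simp add: min_add_distrib_right)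
    also have "\<dots> = min (a + b) (a + d)" using eq2 by (simp add: add.commute)
    also have "\<dots> = a + m2" unfolding m2_def by (simp add: min_add_distrib_left)
    finally show ?thesis by simp
  qed
  have k1: "a' = a \<or> a' + m1 = a + m2"
    by (rule k1lem[OF m1' m2']) (use t in \<open>simp add: m1_def m2_def\<close>)
  have goal: "(a' = a \<and> b' = b \<and> c' = c \<and> d' = d) \<or>
     (a' = a - m1 + m2 \<and> b' = b - m2 + m1 \<and> c' = c - m1 + m2 \<and> d' = d - m2 + m1)"
    using k1
  proof
    assume h: "a' = a"
    then show ?thesis using eq2 ac by simp
  next
    assume h: "a' + m1 = a + m2"
    have 1: "a' = a - m1 + m2" using h bnd(1) by arith
    have 2: "b' = b - m2 + m1" using h bnd(3) eq2(2) by arith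
    have 3: "c' = c - m1 + m2" using h bnd(2) ac by arith
    have 4: "d' = d - m2 + m1" using h bnd(4) eq2(1) by arith
    show ?thesis using 1 2 3 4 by blast
  qed
  show ?thesis using goal ee unfolding m1_def m2_def by auto
qed



lemma atMost3: "{..3::nat} = {0,1,2,3}" by auto
lemma lt3: "{g i | i::nat. i < 3} = {g 0, g 1, g 2}"
  by (auto simp: numeral_3_eq_3 numeral_2_eq_2 less_Suc_eq)

lemma repr:
  assumes "x \<in> arc_diagrams 3 l linf"
  shows "\<exists>s. vld l linf s \<and> x = Dg s"
proof -
  obtain lab c where x: "x = (lab, c)" by (cases x)
  from assms have bij: "bij_betw lab {1..3} {1..3}" and z: "\<forall>k. k \<notin> {1..3} \<longrightarrow> lab k = 0"
    and sym: "\<forall>i j. c i j = c j i" and dg: "\<forall>i. c i i = 0" and big: "\<forall>i j. 3 < i \<longrightarrow> c i j = 0"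
    and nc: "\<forall>i j k m. i < k \<and> k < j \<and> j < m \<and> m \<le> 3 \<longrightarrow> c i j = 0 \<or> c k m = 0"
    and s0: "(\<Sum>j\<le>3. c 0 j) = linf" and si: "\<forall>i\<in>{1..3}. (\<Sum>j\<le>3. c i j) = l (lab i)"
    unfolding arc_diagrams_def x by auto
  have big2: "\<And>i j. 3 < j \<Longrightarrow> c i j = 0" using sym big by metis
  have big1: "\<And>i j. 3 < i \<Longrightarrow> c i j = 0" using big by blast
  have dg1: "\<And>i. c i i = 0" using dg by blast
  have cm: "c = mk (c 0 1) (c 1 2) (c 2 3) (c 3 0) (c 0 2) (c 1 3)"
    apply (intro ext)
    subgoal for i j
      using nat4[of i] nat4[of j] by (elim disjE; simp add: mk_def big1 big2 dg1; metis sym)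
    done
  have lm: "lab = labf (lab 1) (lab 2) (lab 3)"
    apply (intro ext)
    subgoal for k using nat4[of k] z by (elim disjE; simp add: labf_def)
    done
  have "lab ` {1..3} = {1..3}" using bij by (simp only: bij_betw_def)
  then have perm: "{lab 1, lab 2, lab 3} = {1,2,3}" by (simp only: i13 image_insert image_empty)
  have ef: "c 0 2 * c 1 3 = 0" using nc[rule_format, of 0 1 2 3] by auto
  have sy: "c 1 0 = c 0 1" "c 2 0 = c 0 2" "c 2 1 = c 1 2" "c 3 1 = c 1 3" "c 3 2 = c 2 3" "c 0 3 = c 3 0"
    using sym by metis+
  have s0': "c 0 1 + c 3 0 + c 0 2 = linf" using s0 sy unfolding atMost3 by (simp add: dg1)
  have s1': "c 0 1 + c 1 2 + c 1 3 = l (lab 1)" using si[rule_format, of 1] sy unfolding atMost3 by (simp add: dg1)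
  have s2': "c 1 2 + c 2 3 + c 0 2 = l (lab 2)" using si[rule_format, of 2] sy unfolding atMost3 by (simp add: dg1)
  have s3': "c 2 3 + c 3 0 + c 1 3 = l (lab 3)" using si[rule_format, of 3] sy unfolding atMost3 by (simp add: dg1)
  show ?thesis
    apply (rule exI[of _ "St (lab 1) (lab 2) (lab 3) (c 0 1) (c 1 2) (c 2 3) (c 3 0) (c 0 2) (c 1 3)"])
    using perm ef s0' s1' s2' s3' lm cm x by simp
qed

lemma bt: "border_thickness 3 (Dg s) = th s"
  by (cases s) (simp add: border_thickness_def lt3 mk_def min.assoc min.left_commute)

lemma perm3: "{p1,p2,p3} = {1,2,3::nat} \<Longrightarrow>
  (p1,p2,p3) \<in> {(1,2,3),(2,1,3),(1,3,2),(3,2,1),(2,3,1),(3,1,2)}"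
proof -
  assume h: "{p1,p2,p3} = {1,2,3::nat}"
  have "{p1,p2,p3} \<subseteq> {1,2,3}" "{1,2,3} \<subseteq> {p1,p2,p3}" using h by simp_all
  then show ?thesis by auto
qed

lemma canon: "vld l linf s \<Longrightarrow> \<exists>w. set w \<subseteq> G3 \<and> labs (foldr nact w s) = (1,2,3)"
proof (cases s)
  case (St p1 p2 p3 a b c d e f)
  assume "vld l linf s"
  then have "(p1,p2,p3) \<in> {(1,2,3),(2,1,3),(1,3,2),(3,2,1),(2,3,1),(3,1,2)}"
    using perm3 St by simp
  then show ?thesis
  proof (elim insertE emptyE)
    assume "(p1,p2,p3) = (1,2,3)" then show ?thesis using St by (intro exI[of _ "[]"]) simp
  next
    assume "(p1,p2,p3) = (2,1,3)" then show ?thesis using St by (intro exI[of _ "[(1,2)]"]) (simp add: G3_eq nact_def)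
  next
    assume "(p1,p2,p3) = (1,3,2)" then show ?thesis using St by (intro exI[of _ "[(2,3)]"]) (simp add: G3_eq nact_def)
  next
    assume "(p1,p2,p3) = (3,2,1)" then show ?thesis using St by (intro exI[of _ "[(1,3)]"]) (simp add: G3_eq nact_def)
  next
    assume "(p1,p2,p3) = (2,3,1)" then show ?thesis using St by (intro exI[of _ "[(1,3),(1,2)]"]) (simp add: G3_eq nact_def)
  next
    assume "(p1,p2,p3) = (3,1,2)" then show ?thesis using St by (intro exI[of _ "[(1,3),(2,3)]"]) (simp add: G3_eq nact_def)
  qed
qed


theorem mainTheorem8:
  fixes l :: "nat \<Rightarrow> nat" and linf :: nat and x y :: diagram
  assumes "x \<in> arc_diagrams 3 l linf" and "y \<in> arc_diagrams 3 l linf"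
  shows "same_orbit 3 x y \<longleftrightarrow> border_thickness 3 x = border_thickness 3 y"
proof -
  obtain sx where sx: "vld l linf sx" "x = Dg sx" using repr[OF assms(1)] by blast
  obtain sy where sy: "vld l linf sy" "y = Dg sy" using repr[OF assms(2)] by blast
  have G: "{(p, q). 1 \<le> p \<and> p < q \<and> q \<le> (3::nat)} = G3" by (simp add: G3_def)
  show ?thesis
  proof
    assume "same_orbit 3 x y"
    then obtain w where w: "set w \<subseteq> G3" "act_word 3 w x = y" unfolding same_orbit_def G by blast
    then have "y = Dg (foldr nact w sx)" using awD sx by simp
    then show "border_thickness 3 x = border_thickness 3 y" using bt fold_prop[OF sx(1)] sx(2) by simp
  next
    assume h: "border_thickness 3 x = border_thickness 3 y"
    obtain w1 where w1: "set w1 \<subseteq> G3" "labs (foldr nact w1 sx) = (1,2,3)" using canon[OF sx(1)] by blast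
    obtain w2 where w2: "set w2 \<subseteq> G3" "labs (foldr nact w2 sy) = (1,2,3)" using canon[OF sy(1)] by blast
    define x0 where "x0 = foldr nact w1 sx"
    define y0 where "y0 = foldr nact w2 sy"
    have vx: "vld l linf x0" "th x0 = th sx" unfolding x0_def using fold_prop[OF sx(1)] by auto
    have vy: "vld l linf y0" "th y0 = th sy" unfolding y0_def using fold_prop[OF sy(1)] by auto
    have tt: "th x0 = th y0" using vx vy h bt sx sy by simp
    have "\<exists>w3. set w3 \<subseteq> G3 \<and> y0 = foldr nact w3 x0"
    proof (cases x0)
      case (St p1 p2 p3 a b c d e f)
      obtain q1 q2 q3 a' b' c' d' e' f' where y0: "y0 = St q1 q2 q3 a' b' c' d' e' f'" by (cases y0)
      have p: "p1 = 1" "p2 = 2" "p3 = 3" using w1 St x0_def by auto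
      have q: "q1 = 1" "q2 = 2" "q3 = 3" using w2 y0 y0_def by auto
      have ef: "e * f = 0" using vx St by simp
      have k: "y0 = x0 \<or> y0 = St 1 2 3 (a - min a c + min b d) (b - min b d + min a c) (c - min a c + min b d) (d - min b d + min a c) e f"
        using key[of l linf a b c d e f a' b' c' d' e' f'] vx vy tt St y0 p q by simp
      then show ?thesis
      proof
        assume "y0 = x0" then show ?thesis by (intro exI[of _ "[]"]) simp
      next
        assume y: "y0 = St 1 2 3 (a - min a c + min b d) (b - min b d + min a c) (c - min a c + min b d) (d - min b d + min a c) e f"
        have "foldr nact [(2,3),(1,3),(2,3),(1,2)] x0 = n23 (n13 (n23 (n12 x0)))" by (simp add: nact_def)
        also have "\<dots> = y0" using nW_eq[OF ef, of 1 2 3 a b c d] St p y by simp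
        finally show ?thesis by (intro exI[of _ "[(2,3),(1,3),(2,3),(1,2)]"]) (simp add: G3_eq)
      qed
    qed
    then obtain w3 where w3: "set w3 \<subseteq> G3" "y0 = foldr nact w3 x0" by blast
    have "sy = foldr nact (rev w2) y0" unfolding y0_def using fold_inv[OF sy(1)] by simp
    also have "\<dots> = foldr nact (rev w2 @ w3 @ w1) sx" using w3 x0_def by simp
    finally have "y = act_word 3 (rev w2 @ w3 @ w1) x" using sx sy awD w1 w2 w3 by simp
    moreover have "set (rev w2 @ w3 @ w1) \<subseteq> G3" using w1 w2 w3 by auto
    ultimately show "same_orbit 3 x y" unfolding same_orbit_def G by blast
  qed
qed

end
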